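(* Let $v$ be a vertex of $K$ and let $P$ and $Q$ be chain-connected finite subcomplexes of $K$ containing $v$. If there is a cell-preserving isomorphism $\phi:P\to Q$ with $\phi(v)=v$, then $P=Q$.
   Context: $K$ is the decorated combinatorial tiling: a 2-dimensional CW-complex homeomorphic to the open disk, built as follows. A decorated pentagon has boundary vertices $v_1,\dots,v_5$ in cyclic order (indices mod 5) with corner labels $1,\dots,5$, corner $v_i$ labelled $i$. The rule $\omega$ adds a vertex $m_i$ inside each edge $v_iv_{i+1}$, interior vertices $c_1,\dots,c_5$, edges $c_ic_{i+1}$, $c_im_i$, and replaces the face by the central pentagon $c_1\cdots c_5$ (label $i+1$ at $c_i$) and petals $v_i\,m_i\,c_i\,c_{i-1}\,m_{i-1}$ with labels $i,i+1,i+2,i+3,i+4$ (mod 5) at these corners. $K_0$ is one decorated pentagon, $K_n=\omega^n(K_0)$, $K_n$ embeds label-preservingly onto the central superpentagon $\omega^n(\text{central face of }\omega(K_0))$ of $K_{n+1}$, and $K$ is the direct limit. Cell-preserving isomorphisms are required to preserve the corner labels (decorations). Chain-connected: any two faces are joined by a finite chain of faces of the subcomplex, consecutive ones sharing an edge. *)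

theory Defs
  imports Main "HOL-Library.FSet"
begin

text \<open>Vertex names of the finite stages K_n = omega^n(K_0).
  V k: corner of K_0 with (0-based) label k;
  M e: the vertex inserted in the middle of the edge e (a 2-element set);
  C F k: the interior vertex c_k created inside the face F.\<close>
datatype vx = V nat | M "vx fset" | C "vx list" nat

text \<open>A decorated face is the list of its 5 corners indexed by their label:
  F ! L is the corner carrying label L (0-based, L = 0..4, i.e. paper label L+1).
  Its boundary cycle is F!0, F!1, ..., F!4 (consecutive labels).\<close>

definition petal_corner :: "vx list \<Rightarrow> nat \<Rightarrow> nat \<Rightarrow> vx" where
  "petal_corner F k L =
     (let v = (\<lambda>i. F ! (i mod 5));
          m = (\<lambda>i. M {|v i, v (i + 1)|});
          c = (\<lambda>i. C F (i mod 5));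
          d = (L + 5 - k) mod 5
      in if d = 0 then v k
         else if d = 1 then m k
         else if d = 2 then c k
         else if d = 3 then c (k + 4)
         else m (k + 4))"

text \<open>The rule omega applied to one face: central pentagon (corner c_i with label i+1)
  and the five petals v_k m_k c_k c_(k-1) m_(k-1) with labels k,...,k+4.\<close>
definition omega_face :: "vx list \<Rightarrow> vx list set" where
  "omega_face F =
     insert (map (\<lambda>L. C F ((L + 4) mod 5)) [0..<5])
            ((\<lambda>k. map (petal_corner F k) [0..<5]) ` {0..<5})"

definition omega :: "vx list set \<Rightarrow> vx list set" where
  "omega X = (\<Union>F\<in>X. omega_face F)"

definition F0 :: "vx list" where
  "F0 = [V 0, V 1, V 2, V 3, V 4]"

definition Kn :: "nat \<Rightarrow> vx list set" where
  "Kn n = (omega ^^ n) {F0}"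

text \<open>The label-preserving embedding K_n -> K_(n+1) onto the central superpentagon
  omega^n(central face of omega(K_0)).\<close>
primrec iota :: "vx \<Rightarrow> vx" where
  "iota (V k) = C F0 ((k + 4) mod 5)"
| "iota (M s) = M (fimage iota s)"
| "iota (C F k) = C (map iota F) k"

text \<open>Direct limit K: a vertex of K is the class of (n, x) with x a vertex of K_n,
  where (n,x) and (m,y) are identified iff they agree after pushing to level n+m.\<close>
type_synonym kvert = "(nat \<times> vx) set"

definition cls :: "nat \<Rightarrow> vx \<Rightarrow> kvert" where
  "cls n x = {(m, y). (iota ^^ m) x = (iota ^^ n) y}"

definition K_faces :: "kvert list set" where
  "K_faces = {map (cls n) F | n F. F \<in> Kn n}"

text \<open>A subcomplex is given by a set of faces of K (together with their closures).\<close>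
definition verts :: "kvert list set \<Rightarrow> kvert set" where
  "verts P = (\<Union>F\<in>P. set F)"

definition face_edges :: "kvert list \<Rightarrow> kvert set set" where
  "face_edges F = {{F ! i, F ! ((i + 1) mod 5)} | i. i < 5}"

definition share_edge :: "kvert list \<Rightarrow> kvert list \<Rightarrow> bool" where
  "share_edge F G \<longleftrightarrow> face_edges F \<inter> face_edges G \<noteq> {}"

definition chain_connected :: "kvert list set \<Rightarrow> bool" where
  "chain_connected P \<longleftrightarrow>
     (\<forall>F\<in>P. \<forall>G\<in>P. \<exists>cs. cs \<noteq> [] \<and> hd cs = F \<and> last cs = G \<and> set cs \<subseteq> P \<and>
        (\<forall>i. Suc i < length cs \<longrightarrow> share_edge (cs ! i) (cs ! Suc i)))"

definition cell_iso :: "(kvert \<Rightarrow> kvert) \<Rightarrow> kvert list set \<Rightarrow> kvert list set \<Rightarrow> bool" where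
  "cell_iso \<phi> P Q \<longleftrightarrow> bij_betw \<phi> (verts P) (verts Q) \<and> (map \<phi>) ` P = Q"

end

theory Submission
  imports Defs
begin



definition central :: "vx list \<Rightarrow> vx list" where
  "central F = map (\<lambda>L. C F ((L + 4) mod 5)) [0..<5]"
definition petal :: "vx list \<Rightarrow> nat \<Rightarrow> vx list" where
  "petal F k = map (petal_corner F k) [0..<5]"

lemma omega_face_alt: "omega_face F = insert (central F) (petal F ` {0..<5})"
  by (simp add: omega_face_def central_def petal_def)

lemma upt5: "[0..<5] = [0,1,2,3,4::nat]" by (simp add: upt_rec)

lemma central_explicit: "central F = [C F 4, C F 0, C F 1, C F 2, C F 3]"
  by (simp add: central_def upt_rec)

lemma petal_explicit:
  "petal F 0 = [F!0, M {|F!0, F!1|}, C F 0, C F 4, M {|F!4, F!0|}]"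
  "petal F 1 = [M {|F!0, F!1|}, F!1, M {|F!1, F!2|}, C F 1, C F 0]"
  "petal F 2 = [C F 1, M {|F!1, F!2|}, F!2, M {|F!2, F!3|}, C F 2]"
  "petal F 3 = [C F 3, C F 2, M {|F!2, F!3|}, F!3, M {|F!3, F!4|}]"
  "petal F 4 = [M {|F!4, F!0|}, C F 4, C F 3, M {|F!3, F!4|}, F!4]"
  apply (simp_all add: petal_def petal_corner_def upt5 Let_def)
  apply (simp_all add: numeral_2_eq_2)
  done

primrec rank :: "vx \<Rightarrow> nat" where
  "rank (V k) = 0"
| "rank (M s) = Suc (Max (insert 0 (fset (fimage rank s))))"
| "rank (C F k) = Suc (Max (insert 0 (set (map rank F))))"

primrec wfv :: "vx \<Rightarrow> bool" where
  "wfv (V k) = (k < 5)"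
| "wfv (M s) = (False |\<notin>| fimage wfv s)"
| "wfv (C F k) = (k < 5 \<and> length F = 5 \<and> False \<notin> set (map wfv F))"

lemma rank_M: "x |\<in>| s \<Longrightarrow> rank x < rank (M s)"
  by (simp add: le_imp_less_Suc)
lemma rank_C: "x \<in> set F \<Longrightarrow> rank x < rank (C F k)"
  by (simp add: le_imp_less_Suc)

lemma Kn_0: "Kn 0 = {F0}" by (simp add: Kn_def)
lemma Kn_Suc: "Kn (Suc n) = omega (Kn n)" by (simp add: Kn_def)

definition VS :: "nat \<Rightarrow> vx set" where "VS n = (\<Union>F\<in>Kn n. set F)"

definition Inv :: "nat \<Rightarrow> vx list \<Rightarrow> bool" where
"Inv n F \<longleftrightarrow> length F = 5 \<and> distinct F \<and> (\<forall>x\<in>set F. wfv x \<and> rank x \<le> n) \<and>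
   (\<forall>i<5. rank (F!i) = n \<or> rank (F!(Suc i mod 5)) = n)"

lemma less5: "(i::nat) < 5 \<Longrightarrow> i = 0 \<or> i = 1 \<or> i = 2 \<or> i = 3 \<or> i = 4" by auto

lemma len5: "length F = 5 \<Longrightarrow> F = [F!0,F!1,F!2,F!3,F!4]"
  by (rule nth_equalityI) (auto dest!: less5)

lemma rank_C_Inv: assumes "Inv n F" shows "rank (C F k) = Suc n"
proof -
  have le: "\<forall>x\<in>set F. rank x \<le> n" using assms unfolding Inv_def by blast
  have l: "length F = 5" using assms unfolding Inv_def by blast
  have h: "\<forall>i<5. rank (F!i) = n \<or> rank (F!(Suc i mod 5)) = n" using assms unfolding Inv_def by blast
  have "rank (F!0) = n \<or> rank (F!1) = n" using h[rule_format, of 0] by simp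
  moreover have "rank (F!0) \<in> set (map rank F)" "rank (F!1) \<in> set (map rank F)" using l by simp_all
  ultimately have ex: "n \<in> set (map rank F)" by metis
  have "Max (insert 0 (set (map rank F))) = n"
    by (rule Max_eqI) (use le ex in auto)
  then show ?thesis by simp
qed

lemma rank_M_Inv: assumes "Inv n F" "i < 5" shows "rank (M {|F!i, F!(Suc i mod 5)|}) = Suc n"
proof -
  have l: "length F = 5" using assms unfolding Inv_def by blast
  have le0: "\<forall>x\<in>set F. rank x \<le> n" using assms unfolding Inv_def by blast
  have le: "rank (F!i) \<le> n" "rank (F!(Suc i mod 5)) \<le> n" using le0 l assms(2) by simp_all
  have "rank (F!i) = n \<or> rank (F!(Suc i mod 5)) = n" using assms unfolding Inv_def by blast
  then have "Max (insert 0 {rank (F!i), rank (F!(Suc i mod 5))}) = n"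
    by (intro Max_eqI) (use le in auto)
  then show ?thesis by simp
qed

lemma rank_M_Inv': "Inv n F \<Longrightarrow> i < 5 \<Longrightarrow> j = Suc i mod 5 \<Longrightarrow> rank (M {|F!i, F!j|}) = Suc n"
  using rank_M_Inv by blast

lemma fpair_eq: "({|a, b|} = {|c, d|}) \<longleftrightarrow> (a = c \<and> b = d) \<or> (a = d \<and> b = c)"
  by (simp flip: fset_inject add: doubleton_eq_iff)




lemma neq_rankE: "rank x \<noteq> rank y \<Longrightarrow> (x = y) = False" by auto

lemma inv_step:
  assumes I: "Inv n F" and F': "F' \<in> omega_face F"
  shows "Inv (Suc n) F'"
proof -
  have l: "length F = 5" using I by (simp add: Inv_def)
  define a0 where "a0 = F!0"
  define a1 where "a1 = F!1"
  define a2 where "a2 = F!2"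
  define a3 where "a3 = F!3"
  define a4 where "a4 = F!4"
  have Fe: "F = [a0,a1,a2,a3,a4]" using len5[OF l] by (simp add: a0_def a1_def a2_def a3_def a4_def)
  have d: "distinct [a0,a1,a2,a3,a4]" using I Fe by (simp add: Inv_def)
  have r: "\<forall>x\<in>set F. rank x \<le> n \<and> wfv x" using I by (auto simp: Inv_def)
  then have r': "rank a0 \<le> n" "rank a1 \<le> n" "rank a2 \<le> n" "rank a3 \<le> n" "rank a4 \<le> n"
     "wfv a0" "wfv a1" "wfv a2" "wfv a3" "wfv a4" by (simp_all add: Fe)
  have wfF: "k < 5 \<Longrightarrow> wfv (C F k)" for k using r l by auto
  have wfM: "wfv a \<Longrightarrow> wfv b \<Longrightarrow> wfv (M {|a,b|})" for a b by simp
  have rc: "\<And>k. rank (C F k) = Suc n" using rank_C_Inv[OF I] .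
  have rm: "rank (M {|a0, a1|}) = Suc n" "rank (M {|a1, a2|}) = Suc n"
     "rank (M {|a2, a3|}) = Suc n" "rank (M {|a3, a4|}) = Suc n" "rank (M {|a4, a0|}) = Suc n"
    unfolding a0_def a1_def a2_def a3_def a4_def
    by (rule rank_M_Inv'[OF I]; simp)+
  have pe: "petal F 0 = [a0, M {|a0, a1|}, C F 0, C F 4, M {|a4, a0|}]"
    "petal F 1 = [M {|a0, a1|}, a1, M {|a1, a2|}, C F 1, C F 0]"
    "petal F 2 = [C F 1, M {|a1, a2|}, a2, M {|a2, a3|}, C F 2]"
    "petal F 3 = [C F 3, C F 2, M {|a2, a3|}, a3, M {|a3, a4|}]"
    "petal F 4 = [M {|a4, a0|}, C F 4, C F 3, M {|a3, a4|}, a4]"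
    unfolding a0_def a1_def a2_def a3_def a4_def by (rule petal_explicit)+
  have IS: "Inv (Suc n) [x0,x1,x2,x3,x4]" if
    "distinct [x0,x1,x2,x3,x4]" "wfv x0" "wfv x1" "wfv x2" "wfv x3" "wfv x4"
    "rank x0 \<le> Suc n" "rank x1 \<le> Suc n" "rank x2 \<le> Suc n" "rank x3 \<le> Suc n" "rank x4 \<le> Suc n"
    "rank x0 = Suc n \<or> rank x1 = Suc n" "rank x1 = Suc n \<or> rank x2 = Suc n"
    "rank x2 = Suc n \<or> rank x3 = Suc n" "rank x3 = Suc n \<or> rank x4 = Suc n"
    "rank x4 = Suc n \<or> rank x0 = Suc n" for x0 x1 x2 x3 x4
  proof -
    have e: "\<forall>i<5. rank ([x0,x1,x2,x3,x4]!i) = Suc n \<or> rank ([x0,x1,x2,x3,x4]!(Suc i mod 5)) = Suc n"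
    proof (intro allI impI)
      fix i :: nat assume "i < 5"
      then consider "i = 0" | "i = 1" | "i = 2" | "i = 3" | "i = 4" by linarith
      then show "rank ([x0,x1,x2,x3,x4]!i) = Suc n \<or> rank ([x0,x1,x2,x3,x4]!(Suc i mod 5)) = Suc n"
        by cases (use that in simp_all)
    qed
    show ?thesis unfolding Inv_def using that e by simp
  qed
  have mod5: "\<And>i::nat. i < 5 \<Longrightarrow> i = 0 \<or> i = 1 \<or> i = 2 \<or> i = 3 \<or> i = 4" by auto
  from F' consider "F' = central F" | k where "k < 5" "F' = petal F k"
    by (auto simp: omega_face_alt)
  then show ?thesis
  proof cases
    case 1
    show ?thesis unfolding 1 central_explicit
      by (rule IS) (simp_all del: rank.simps wfv.simps add: rc wfF)
  next
    case 2
    have nq1: "\<And>x y. rank x \<le> n \<Longrightarrow> rank y = Suc n \<Longrightarrow> (x = y) = False" by auto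
    have nq2: "\<And>x y. rank x \<le> n \<Longrightarrow> rank y = Suc n \<Longrightarrow> (y = x) = False" by auto
    have r2: "rank a0 \<le> Suc n" "rank a1 \<le> Suc n" "rank a2 \<le> Suc n" "rank a3 \<le> Suc n" "rank a4 \<le> Suc n"
      using r' by simp_all
    note ss = rc rm r' r2 wfF wfM fpair_eq nq1 nq2
    from 2(1) have "k = 0 \<or> k = 1 \<or> k = 2 \<or> k = 3 \<or> k = 4" using mod5 by blast
    from this d show ?thesis unfolding 2(2)
      apply -
      by (elim disjE; hypsubst; simp only: pe; rule IS; simp_all del: rank.simps wfv.simps add: ss)
  qed
qed

lemma Kn_Inv: "F \<in> Kn n \<Longrightarrow> Inv n F"
proof (induction n arbitrary: F)
  case 0
  then have F: "F = F0" by (simp add: Kn_0)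
  have r0: "\<forall>x\<in>set F0. rank x = 0 \<and> wfv x" by (simp add: F0_def)
  have l0: "length F0 = 5" by (simp add: F0_def)
  have "\<forall>i<5. rank (F0!i) = 0" using r0 l0 by (metis nth_mem)
  then have "\<forall>i<5. rank (F0!i) = 0 \<or> rank (F0!(Suc i mod 5)) = 0" by simp
  moreover have "distinct F0" by (simp add: F0_def)
  ultimately show ?case unfolding F Inv_def using r0 l0 by simp
next
  case (Suc n)
  then obtain G where "G \<in> Kn n" "F \<in> omega_face G" by (auto simp: Kn_Suc omega_def)
  then show ?case using Suc.IH inv_step by blast
qed

lemma VS_rank: "x \<in> VS n \<Longrightarrow> rank x \<le> n"
  unfolding VS_def using Kn_Inv by (auto simp: Inv_def)

lemma VS_wfv: "x \<in> VS n \<Longrightarrow> wfv x"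
  unfolding VS_def using Kn_Inv by (auto simp: Inv_def)




definition other :: "vx fset \<Rightarrow> vx \<Rightarrow> vx" where "other e x = (THE y. e = {|x, y|})"
definition pick :: "vx fset \<Rightarrow> vx" where "pick e = (SOME x. x |\<in>| e)"
definition eidx :: "vx list \<Rightarrow> vx \<Rightarrow> vx \<Rightarrow> nat" where
  "eidx G x y = (THE i. i < 5 \<and> {G!i, G!(Suc i mod 5)} = {x, y})"

definition R1 :: "vx list \<Rightarrow> nat \<Rightarrow> nat \<Rightarrow> vx list" where
  "R1 H k L = (if L = Suc k mod 5 \<or> L = Suc (Suc k) mod 5 then central H else petal H (Suc k mod 5))"
definition R2 :: "vx list \<Rightarrow> nat \<Rightarrow> nat \<Rightarrow> vx list" where
  "R2 H k L = (if L = Suc k mod 5 \<or> L = Suc (Suc k) mod 5 then petal H k else petal H (Suc k mod 5))"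
definition R3 :: "(vx \<Rightarrow> vx \<Rightarrow> nat \<Rightarrow> vx list) \<Rightarrow> vx fset \<Rightarrow> vx \<Rightarrow> nat \<Rightarrow> vx list" where
  "R3 D e x L = (let y = other e x; G = D x y L; i = eidx G x y in
      if x = G!i then petal G i else petal G (Suc i mod 5))"

fun Dstep :: "(vx \<Rightarrow> vx \<Rightarrow> nat \<Rightarrow> vx list) \<Rightarrow> vx \<Rightarrow> vx \<Rightarrow> nat \<Rightarrow> vx list" where
  "Dstep D (C H k) (C H' k') L = (if H' = H \<and> k' = Suc k mod 5 then R1 H k L else R1 H k' L)"
| "Dstep D (C H k) (M e) L = (if e = {|H!k, H!(Suc k mod 5)|} then R2 H k L else R3 D e (C H k) L)"
| "Dstep D (M e) (C H k) L = (if e = {|H!k, H!(Suc k mod 5)|} then R2 H k L else R3 D e (C H k) L)"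
| "Dstep D (M e) (M e') L = (if M e |\<in>| e' then R3 D e' (M e) L else R3 D e (M e') L)"
| "Dstep D (V j) (M e) L = R3 D e (V j) L"
| "Dstep D (M e) (V j) L = R3 D e (V j) L"
| "Dstep D (V j) (V j') L = F0"
| "Dstep D (V j) (C H k) L = F0"
| "Dstep D (C H k) (V j) L = F0"

primrec Dd :: "nat \<Rightarrow> vx \<Rightarrow> vx \<Rightarrow> nat \<Rightarrow> vx list" where
  "Dd 0 = (\<lambda>_ _ _. F0)"
| "Dd (Suc n) = Dstep (Dd n)"

definition decnew :: "(vx \<Rightarrow> vx \<Rightarrow> nat \<Rightarrow> vx list) \<Rightarrow> vx \<Rightarrow> nat \<Rightarrow> vx list" where
  "decnew D x L = (case x of
      C H k \<Rightarrow> (if L = Suc k mod 5 then central H else if L = Suc (Suc k) mod 5 then petal H k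
               else petal H (Suc k mod 5))
    | M e \<Rightarrow> (let a = pick e; b = other e a; G = D a b L; i = eidx G a b in
               if L = Suc i mod 5 then petal G i else petal G (Suc i mod 5))
    | V _ \<Rightarrow> F0)"

primrec dec :: "nat \<Rightarrow> vx \<Rightarrow> nat \<Rightarrow> vx list" where
  "dec 0 = (\<lambda>_ _. F0)"
| "dec (Suc n) = (\<lambda>x L. if x \<in> VS n then petal (dec n x L) L else decnew (Dd n) x L)"

definition DC :: "nat \<Rightarrow> bool" where
  "DC n \<longleftrightarrow> (\<forall>G\<in>Kn n. \<forall>i<5. \<forall>L. (L = i \<or> L = Suc i mod 5) \<longrightarrow>
      Dd n (G!i) (G!(Suc i mod 5)) L = G \<and> Dd n (G!(Suc i mod 5)) (G!i) L = G)"
definition DV :: "nat \<Rightarrow> bool" where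
  "DV n \<longleftrightarrow> (\<forall>G\<in>Kn n. \<forall>L<5. dec n (G!L) L = G)"

lemma other1: "other {|a,b|} a = b"
  unfolding other_def by (rule the_equality) (auto simp: fpair_eq)
lemma other2: "other {|a,b|} b = a"
  using other1[of b a] by (simp add: finsert_commute)

lemma SSi: "(i::nat) < 5 \<Longrightarrow> Suc (Suc i mod 5) mod 5 \<noteq> i \<and> Suc i mod 5 \<noteq> i"
  by (auto dest!: less5)

lemma eidx1:
  assumes I: "Inv n G" and i: "i < 5"
  shows "eidx G (G!i) (G!(Suc i mod 5)) = i" "eidx G (G!(Suc i mod 5)) (G!i) = i"
proof -
  have l: "length G = 5" and d: "distinct G" using I by (auto simp: Inv_def)
  have u: "j = i" if j: "j < 5" and e: "{G!j, G!(Suc j mod 5)} = {G!i, G!(Suc i mod 5)}" for j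
  proof -
    have sj: "Suc j mod 5 < 5" "Suc i mod 5 < 5" by auto
    from e consider "G!j = G!i" "G!(Suc j mod 5) = G!(Suc i mod 5)"
      | "G!j = G!(Suc i mod 5)" "G!(Suc j mod 5) = G!i" by (auto simp: doubleton_eq_iff)
    then show ?thesis
    proof cases
      case 1 then show ?thesis using d l j i nth_eq_iff_index_eq by metis
    next
      case 2
      then have "j = Suc i mod 5" "Suc j mod 5 = i" using d l j i sj nth_eq_iff_index_eq by metis+
      then show ?thesis using SSi[OF i] by simp
    qed
  qed
  show "eidx G (G!i) (G!(Suc i mod 5)) = i" unfolding eidx_def
    by (rule the_equality) (use i u in auto)
  show "eidx G (G!(Suc i mod 5)) (G!i) = i" unfolding eidx_def
    by (rule the_equality) (use i u in \<open>auto simp: insert_commute\<close>)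
qed

lemma E1: "Dstep D (C H k) (C H (Suc k mod 5)) L = R1 H k L" by simp
lemma E1': "k < 5 \<Longrightarrow> Dstep D (C H (Suc k mod 5)) (C H k) L = R1 H k L"
  using SSi[of k] by simp
lemma E2: "Dstep D (C H k) (M {|H!k, H!(Suc k mod 5)|}) L = R2 H k L" by simp
lemma E2': "Dstep D (M {|H!k, H!(Suc k mod 5)|}) (C H k) L = R2 H k L" by simp

lemma E3:
  assumes "wfv x" "x |\<in>| e"
  shows "Dstep D x (M e) L = R3 D e x L \<and> Dstep D (M e) x L = R3 D e x L"
proof (cases x)
  case (V j) then show ?thesis by simp
next
  case (M e0)
  have "rank (M e0) < rank (M e)" using assms(2) M rank_M by blast
  then have "\<not> M e |\<in>| e0" using rank_M by fastforce
  then show ?thesis using M assms by simp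
next
  case (C H k)
  have k: "k < 5" "length H = 5" using assms(1) C by auto
  have "e \<noteq> {|H!k, H!(Suc k mod 5)|}"
  proof
    assume "e = {|H!k, H!(Suc k mod 5)|}"
    then have "x \<in> set H" using assms(2) k by auto
    then show False using rank_C[of x H k] C by simp
  qed
  then show ?thesis using C by simp
qed




lemma DC_D:
  assumes "DC n" "F \<in> Kn n" "i < 5" "j = Suc i mod 5" "L = i \<or> L = j"
  shows "Dd n (F!i) (F!j) L = F \<and> Dd n (F!j) (F!i) L = F"
  using assms unfolding DC_def by blast

lemma Inv_facts:
  assumes "F \<in> Kn n"
  shows "length F = 5" "distinct F" "\<And>x. x \<in> set F \<Longrightarrow> wfv x \<and> rank x \<le> n"
  using Kn_Inv[OF assms] by (auto simp: Inv_def)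

lemma nth_inj5: "F \<in> Kn n \<Longrightarrow> i < 5 \<Longrightarrow> j < 5 \<Longrightarrow> (F!i = F!j) = (i = j)"
  using Inv_facts[of F n] nth_eq_iff_index_eq by metis

lemma R3a:
  assumes DC: "DC n" and F: "F \<in> Kn n" and i: "i < 5" and j: "j = Suc i mod 5" and L: "L = i \<or> L = j"
  shows "R3 (Dd n) {|F!i, F!j|} (F!i) L = petal F i"
proof -
  have I: "Inv n F" by (rule Kn_Inv[OF F])
  have "Dd n (F!i) (F!j) L = F" using DC_D[OF DC F i j L] by blast
  then show ?thesis unfolding R3_def Let_def other1 using eidx1(1)[OF I i] j by simp
qed

lemma R3b:
  assumes DC: "DC n" and F: "F \<in> Kn n" and i: "i < 5" and j: "j = Suc i mod 5" and L: "L = i \<or> L = j"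
  shows "R3 (Dd n) {|F!i, F!j|} (F!j) L = petal F j"
proof -
  have I: "Inv n F" by (rule Kn_Inv[OF F])
  have "Dd n (F!j) (F!i) L = F" using DC_D[OF DC F i j L] by blast
  moreover have "F!j \<noteq> F!i" using nth_inj5[OF F, of j i] SSi[OF i] j i by simp
  ultimately show ?thesis unfolding R3_def Let_def other2 using eidx1(2)[OF I i] j by simp
qed

lemma Dold:
  assumes DC: "DC n" and F: "F \<in> Kn n" and i: "i < 5" and j: "j = Suc i mod 5" and L: "L = i \<or> L = j"
  shows "Dstep (Dd n) (F!i) (M {|F!i, F!j|}) L = petal F i"
    "Dstep (Dd n) (M {|F!i, F!j|}) (F!i) L = petal F i"
    "Dstep (Dd n) (F!j) (M {|F!i, F!j|}) L = petal F j"
    "Dstep (Dd n) (M {|F!i, F!j|}) (F!j) L = petal F j"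
proof -
  have l: "length F = 5" using Inv_facts[OF F] by simp
  have w: "wfv (F!i)" "wfv (F!j)" using Inv_facts(3)[OF F, of "F!i"] Inv_facts(3)[OF F, of "F!j"] l i j
    by auto
  show "Dstep (Dd n) (F!i) (M {|F!i, F!j|}) L = petal F i"
    "Dstep (Dd n) (M {|F!i, F!j|}) (F!i) L = petal F i"
    using E3[OF w(1), of "{|F!i, F!j|}"] R3a[OF assms] by simp_all
  show "Dstep (Dd n) (F!j) (M {|F!i, F!j|}) L = petal F j"
    "Dstep (Dd n) (M {|F!i, F!j|}) (F!j) L = petal F j"
    using E3[OF w(2), of "{|F!i, F!j|}"] R3b[OF assms] by simp_all
qed

lemma decM:
  assumes DC: "DC n" and F: "F \<in> Kn n" and i: "i < 5" and j: "j = Suc i mod 5" and L: "L = i \<or> L = j"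
  shows "dec (Suc n) (M {|F!i, F!j|}) L = (if L = j then petal F i else petal F j)"
proof -
  have I: "Inv n F" by (rule Kn_Inv[OF F])
  have nv: "M {|F!i, F!j|} \<notin> VS n" using rank_M_Inv[OF I i] VS_rank j by fastforce
  have pk: "pick {|F!i, F!j|} = F!i \<or> pick {|F!i, F!j|} = F!j"
    unfolding pick_def by (rule someI2[of _ "F!i"]) auto
  have D: "Dd n (F!i) (F!j) L = F" "Dd n (F!j) (F!i) L = F" using DC_D[OF DC F i j L] by blast+
  have e: "dec (Suc n) (M {|F!i, F!j|}) L = decnew (Dd n) (M {|F!i, F!j|}) L" using nv by simp
  from pk show ?thesis
  proof
    assume a: "pick {|F!i, F!j|} = F!i"
    have ei: "eidx F (F!i) (F!j) = i" using eidx1(1)[OF I i] j by simp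
    show ?thesis using j unfolding e decnew_def vx.case Let_def a other1 D ei by simp
  next
    assume a: "pick {|F!i, F!j|} = F!j"
    have ei: "eidx F (F!j) (F!i) = i" using eidx1(2)[OF I i] j by simp
    show ?thesis using j unfolding e decnew_def vx.case Let_def a other2 D ei by simp
  qed
qed

lemma decC:
  assumes F: "F \<in> Kn n"
  shows "dec (Suc n) (C F k) L = (if L = Suc k mod 5 then central F else if L = Suc (Suc k) mod 5 then petal F k
               else petal F (Suc k mod 5))"
proof -
  have "C F k \<notin> VS n" using rank_C_Inv[OF Kn_Inv[OF F]] VS_rank by fastforce
  then show ?thesis by (simp add: decnew_def)
qed

lemma decOld:
  assumes F: "F \<in> Kn n" and i: "i < 5"
  shows "dec (Suc n) (F!i) L = petal (dec n (F!i) L) L"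
proof -
  have "F!i \<in> set F" using i Inv_facts(1)[OF F] by simp
  then have "F!i \<in> VS n" using F unfolding VS_def by blast
  then show ?thesis by simp
qed




lemma E1c: "k' = Suc k mod 5 \<Longrightarrow> Dstep D (C H k) (C H k') L = R1 H k L" by simp
lemma E1c': "k < 5 \<Longrightarrow> k' = Suc k mod 5 \<Longrightarrow> Dstep D (C H k') (C H k) L = R1 H k L"
  using E1' by simp
lemma E2c: "k' = Suc k mod 5 \<Longrightarrow> Dstep D (C H k) (M {|H!k, H!k'|}) L = R2 H k L" by simp
lemma E2c': "k' = Suc k mod 5 \<Longrightarrow> Dstep D (M {|H!k, H!k'|}) (C H k) L = R2 H k L" by simp

lemma omega_face_cases:
  assumes "G \<in> Kn (Suc n)"
  obtains F where "F \<in> Kn n" "G = central F"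
    | F k where "F \<in> Kn n" "k = 0 \<or> k = 1 \<or> k = 2 \<or> k = 3 \<or> k = 4" "G = petal F k"
proof -
  from assms obtain F where F: "F \<in> Kn n" "G \<in> omega_face F" by (auto simp: Kn_Suc omega_def)
  then have "G = central F \<or> (\<exists>k<5. G = petal F k)" by (auto simp: omega_face_alt)
  then show ?thesis
  proof
    assume "G = central F" then show ?thesis using that(1) F by blast
  next
    assume "\<exists>k<5. G = petal F k"
    then obtain k where k: "k < 5" "G = petal F k" by blast
    from k(1) have "k = 0 \<or> k = 1 \<or> k = 2 \<or> k = 3 \<or> k = 4" by (rule less5)
    then show ?thesis using that(2) F k(2) by blast
  qed
qed

lemma DV_step:
  assumes DV: "DV n" and DC: "DC n"
  shows "DV (Suc n)"
  unfolding DV_def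
proof (intro ballI allI impI)
  fix G L assume G: "G \<in> Kn (Suc n)" and L: "(L::nat) < 5"
  from L have Ls: "L = 0 \<or> L = 1 \<or> L = 2 \<or> L = 3 \<or> L = 4" by auto
  from G show "dec (Suc n) (G!L) L = G"
  proof (cases rule: omega_face_cases)
    case (1 F)
    note dC = decC[OF 1(1)]
    from Ls show ?thesis unfolding 1(2)
      by (elim disjE; hypsubst; simp del: dec.simps add: dC central_explicit)
  next
    case (2 F k)
    note F = 2(1)
    note dC = decC[OF F]
    have dO: "dec (Suc n) (F!k) k = petal F k" if "k < 5" for k
      using decOld[OF F that] DV F that unfolding DV_def by simp
    have dO': "dec (Suc n) (F!0) 0 = petal F 0" "dec (Suc n) (F!1) 1 = petal F 1"
      "dec (Suc n) (F!2) 2 = petal F 2" "dec (Suc n) (F!3) 3 = petal F 3" "dec (Suc n) (F!4) 4 = petal F 4"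
      by (rule dO; simp)+
    have dM: "\<And>L. L = 0 \<or> L = 1 \<Longrightarrow> dec (Suc n) (M {|F!0, F!1|}) L = (if L = 1 then petal F 0 else petal F 1)"
      "\<And>L. L = 1 \<or> L = 2 \<Longrightarrow> dec (Suc n) (M {|F!1, F!2|}) L = (if L = 2 then petal F 1 else petal F 2)"
      "\<And>L. L = 2 \<or> L = 3 \<Longrightarrow> dec (Suc n) (M {|F!2, F!3|}) L = (if L = 3 then petal F 2 else petal F 3)"
      "\<And>L. L = 3 \<or> L = 4 \<Longrightarrow> dec (Suc n) (M {|F!3, F!4|}) L = (if L = 4 then petal F 3 else petal F 4)"
      "\<And>L. L = 4 \<or> L = 0 \<Longrightarrow> dec (Suc n) (M {|F!4, F!0|}) L = (if L = 0 then petal F 4 else petal F 0)"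
      by (rule decM[OF DC F]; simp)+
    have p2: "petal F (Suc (Suc 0)) = petal F 2" by (simp add: numeral_2_eq_2)
    note ss = p2 dC dO'[simplified One_nat_def] dM[simplified One_nat_def] petal_explicit[simplified One_nat_def]
    have k0: "dec (Suc n) (petal F 0 ! L) L = petal F 0" using Ls
      by (elim disjE; hypsubst; simp del: dec.simps add: ss)
    have k1: "dec (Suc n) (petal F 1 ! L) L = petal F 1" using Ls
      by (elim disjE; hypsubst; simp del: dec.simps add: ss)
    have k2: "dec (Suc n) (petal F 2 ! L) L = petal F 2" using Ls
      by (elim disjE; hypsubst; simp del: dec.simps add: ss)
    have k3: "dec (Suc n) (petal F 3 ! L) L = petal F 3" using Ls
      by (elim disjE; hypsubst; simp del: dec.simps add: ss)
    have k4: "dec (Suc n) (petal F 4 ! L) L = petal F 4" using Ls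
      by (elim disjE; hypsubst; simp del: dec.simps add: ss)
    from 2(2) show ?thesis unfolding 2(3) using k0 k1 k2 k3 k4 by auto
  qed
qed

lemma DC_step:
  assumes DC: "DC n"
  shows "DC (Suc n)"
  unfolding DC_def
proof (intro ballI allI impI)
  fix G i L assume G: "G \<in> Kn (Suc n)" and i: "(i::nat) < 5" and L: "L = i \<or> L = Suc i mod 5"
  from i have ks: "i = 0 \<or> i = 1 \<or> i = 2 \<or> i = 3 \<or> i = 4" by auto
  from G show "Dd (Suc n) (G!i) (G!(Suc i mod 5)) L = G \<and> Dd (Suc n) (G!(Suc i mod 5)) (G!i) L = G"
  proof (cases rule: omega_face_cases)
    case (1 F)
    from ks L show ?thesis unfolding 1(2)
      by (elim disjE; hypsubst; simp del: Dstep.simps add: E1c E1c' R1_def central_explicit)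
  next
    case (2 F k)
    note F = 2(1)
    note DO = Dold[OF DC F]
    have p2: "petal F (Suc (Suc 0)) = petal F 2" by (simp add: numeral_2_eq_2)
    note ss = p2 E1c E1c' E2c E2c' DO R1_def R2_def petal_explicit[simplified One_nat_def]
    have k0: "k = 0 \<Longrightarrow> ?thesis" using ks L unfolding 2(3)
      by (elim disjE; hypsubst; simp del: Dstep.simps add: ss)
    have k1: "k = 1 \<Longrightarrow> ?thesis" using ks L unfolding 2(3)
      by (elim disjE; hypsubst; simp del: Dstep.simps add: ss)
    have k2: "k = 2 \<Longrightarrow> ?thesis" using ks L unfolding 2(3)
      by (elim disjE; hypsubst; simp del: Dstep.simps add: ss)
    have k3: "k = 3 \<Longrightarrow> ?thesis" using ks L unfolding 2(3)
      by (elim disjE; hypsubst; simp del: Dstep.simps add: ss)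
    have k4: "k = 4 \<Longrightarrow> ?thesis" using ks L unfolding 2(3)
      by (elim disjE; hypsubst; simp del: Dstep.simps add: ss)
    from 2(2) show ?thesis using k0 k1 k2 k3 k4 by blast
  qed
qed




lemma DC_all: "DC n"
proof (induction n)
  case 0 then show ?case by (simp add: DC_def Kn_0)
next
  case (Suc n) then show ?case by (rule DC_step)
qed

lemma DV_all: "DV n"
proof (induction n)
  case 0 then show ?case by (simp add: DV_def Kn_0)
next
  case (Suc n) then show ?case using DV_step DC_all by blast
qed

lemma uniq_fin: "F \<in> Kn n \<Longrightarrow> G \<in> Kn n \<Longrightarrow> L < 5 \<Longrightarrow> F!L = G!L \<Longrightarrow> F = G"
  using DV_all[of n] unfolding DV_def by metis

primrec wfi :: "vx \<Rightarrow> bool" where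
  "wfi (V k) = (k < 5)"
| "wfi (M s) = (False |\<notin>| fimage wfi s)"
| "wfi (C F k) = (False \<notin> set (map wfi F))"

lemma wfv_wfi: "wfv x \<Longrightarrow> wfi x"
  by (induction x) (auto simp: fimage_iff)

lemma iota_notV: "iota x \<noteq> V j"
  by (cases x) auto

lemma wfi_iota: "wfi (iota x)"
  by (induction x) (auto simp: F0_def fimage_iff)

lemma iota_inj: "wfi x \<Longrightarrow> wfi y \<Longrightarrow> iota x = iota y \<Longrightarrow> x = y"
proof (induction x arbitrary: y)
  case (V k)
  then show ?case
  proof (cases y)
    case (V k')
    with V.prems have "(k + 4) mod 5 = (k' + 4) mod 5" "k < 5" "k' < 5" by simp_all
    then have "k = k'" using less5[of k] less5[of k'] by auto
    then show ?thesis using \<open>y = V k'\<close> by simp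
  next
    case (M s') with V.prems show ?thesis by simp
  next
    case (C G j)
    with V.prems have "map iota G = F0" by simp
    then show ?thesis using iota_notV by (cases G) (auto simp: F0_def)
  qed
next
  case (M s)
  then show ?case
  proof (cases y)
    case (V k') with M.prems show ?thesis by simp
  next
    case (M s')
    have ws: "\<And>a. a \<in> fset s \<Longrightarrow> wfi a" "\<And>a. a \<in> fset s' \<Longrightarrow> wfi a"
      using M.prems \<open>y = M s'\<close> by (auto simp: fimage_iff)
    have "iota |`| s = iota |`| s'" using M.prems \<open>y = M s'\<close> by simp
    then have "fset (iota |`| s) = fset (iota |`| s')" by simp
    then have e: "iota ` fset s = iota ` fset s'" by (simp add: fimage.rep_eq)
    have "fset s = fset s'"
    proof
      show "fset s \<subseteq> fset s'"
      proof
        fix a assume a: "a \<in> fset s"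
        then obtain b where b: "b \<in> fset s'" "iota a = iota b" using e by (metis imageE imageI)
        then have "a = b" using M.IH[OF a ws(1)[OF a] ws(2)[OF b(1)]] by simp
        then show "a \<in> fset s'" using b by simp
      qed
      show "fset s' \<subseteq> fset s"
      proof
        fix b assume b: "b \<in> fset s'"
        then obtain a where a: "a \<in> fset s" "iota b = iota a" using e by (metis imageE imageI)
        then have "a = b" using M.IH[OF a(1) ws(1)[OF a(1)] ws(2)[OF b]] by simp
        then show "b \<in> fset s" using a by simp
      qed
    qed
    then show ?thesis using \<open>y = M s'\<close> by (simp add: fset_inject)
  next
    case (C G j) with M.prems show ?thesis by simp
  qed
next
  case (C F k)
  then show ?case
  proof (cases y)
    case (V k')
    with C.prems have "map iota F = F0" by simp
    then show ?thesis using iota_notV by (cases F) (auto simp: F0_def)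
  next
    case (M s') with C.prems show ?thesis by simp
  next
    case (C G j)
    have e: "map iota F = map iota G" "k = j" using C.prems \<open>y = C G j\<close> by simp_all
    have l: "length F = length G" using e(1) by (metis length_map)
    have wF: "wfi x" if "x \<in> set F" for x
    proof -
      have a: "wfi x \<in> set (map wfi F)" using that by simp
      have b: "False \<notin> set (map wfi F)" using C.prems(1) by simp
      from a b show ?thesis by (metis (full_types))
    qed
    have wG: "wfi x" if "x \<in> set G" for x
    proof -
      have a: "wfi x \<in> set (map wfi G)" using that by simp
      have b: "False \<notin> set (map wfi G)" using C.prems(2) \<open>y = C G j\<close> by simp
      from a b show ?thesis by (metis (full_types))
    qed
    have "F = G"
    proof (rule nth_equalityI[OF l])
      fix i assume i: "i < length F"
      have "map iota F ! i = map iota G ! i" using e(1) by simp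
      then have ie: "iota (F!i) = iota (G!i)" using i l by simp
      have w: "wfi (F!i)" "wfi (G!i)" using wF wG i l by simp_all
      have "F!i \<in> set F" using i by simp
      from C.IH[OF this w ie] show "F!i = G!i" .
    qed
    then show ?thesis using e \<open>y = C G j\<close> by simp
  qed
qed


lemma petal_corner_iota: "length F = 5 \<Longrightarrow> iota (petal_corner F k L) = petal_corner (map iota F) k L"
  by (simp add: petal_corner_def Let_def)

lemma petal_iota: "length F = 5 \<Longrightarrow> map iota (petal F k) = petal (map iota F) k"
  by (simp add: petal_def petal_corner_iota)

lemma central_iota: "map iota (central F) = central (map iota F)"
  by (simp add: central_def)

lemma omega_face_iota: "length F = 5 \<Longrightarrow> map iota ` omega_face F = omega_face (map iota F)"
  by (simp add: omega_face_alt central_iota petal_iota image_image)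

lemma Kn_iota: "F \<in> Kn n \<Longrightarrow> map iota F \<in> Kn (Suc n)"
proof (induction n arbitrary: F)
  case 0
  then have "F = F0" by (simp add: Kn_0)
  then have "map iota F = central F0" by (simp add: F0_def central_explicit)
  then show ?case by (simp add: Kn_Suc Kn_0 omega_def omega_face_alt)
next
  case (Suc n)
  then obtain H where H: "H \<in> Kn n" "F \<in> omega_face H" by (auto simp: Kn_Suc omega_def)
  have l: "length H = 5" using Inv_facts(1)[OF H(1)] .
  have "map iota F \<in> omega_face (map iota H)" using H(2) omega_face_iota[OF l] by blast
  moreover have "map iota H \<in> Kn (Suc n)" using Suc.IH[OF H(1)] .
  ultimately show ?case by (auto simp: Kn_Suc[of "Suc n"] omega_def)
qed

lemma Kn_iotaN: "F \<in> Kn n \<Longrightarrow> map (iota ^^ m) F \<in> Kn (n + m)"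
proof (induction m)
  case 0 then show ?case by simp
next
  case (Suc m)
  have "map (iota ^^ Suc m) F = map iota (map (iota ^^ m) F)" by simp
  then show ?case using Kn_iota[OF Suc.IH[OF Suc.prems]] by (simp add: o_def)
qed

lemma funpow_comm: "(iota ^^ a) ((iota ^^ b) x) = (iota ^^ b) ((iota ^^ a) x)"
  by (metis add.commute comp_apply funpow_add)

lemma wfi_iotaN: "wfi x \<Longrightarrow> wfi ((iota ^^ p) x)"
  by (induction p) (auto simp: wfi_iota)

lemma wfi_iotaN1: "1 \<le> n \<Longrightarrow> wfi ((iota ^^ n) z)"
  by (cases n) (auto simp: wfi_iota)

lemma inj_iotaN: "wfi x \<Longrightarrow> wfi y \<Longrightarrow> (iota ^^ p) x = (iota ^^ p) y \<Longrightarrow> x = y"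
proof (induction p)
  case 0 then show ?case by simp
next
  case (Suc p)
  have "iota ((iota ^^ p) x) = iota ((iota ^^ p) y)" using Suc.prems(3) by simp
  then have "(iota ^^ p) x = (iota ^^ p) y" using iota_inj wfi_iotaN Suc.prems(1,2) by blast
  then show ?case using Suc.IH Suc.prems(1,2) by blast
qed

lemma cls_mem: "((p, z) \<in> cls n x) = ((iota ^^ p) x = (iota ^^ n) z)"
  by (simp add: cls_def)

lemma cls_dir:
  assumes "1 \<le> n" "1 \<le> m" "wfi x" "wfi y" "(iota ^^ m) x = (iota ^^ n) y"
    and "(p, z) \<in> cls n x"
  shows "(p, z) \<in> cls m y"
proof -
  have h: "(iota ^^ p) x = (iota ^^ n) z" using assms(6) by (simp add: cls_mem)
  have "(iota ^^ n) ((iota ^^ p) y) = (iota ^^ p) ((iota ^^ n) y)" by (rule funpow_comm)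
  also have "\<dots> = (iota ^^ p) ((iota ^^ m) x)" using assms(5) by simp
  also have "\<dots> = (iota ^^ m) ((iota ^^ p) x)" by (rule funpow_comm)
  also have "\<dots> = (iota ^^ m) ((iota ^^ n) z)" using h by simp
  also have "\<dots> = (iota ^^ n) ((iota ^^ m) z)" by (rule funpow_comm)
  finally have "(iota ^^ p) y = (iota ^^ m) z"
    using inj_iotaN wfi_iotaN[OF assms(4)] wfi_iotaN1[OF assms(2)] by blast
  then show ?thesis by (simp add: cls_mem)
qed

lemma cls_eq:
  assumes "1 \<le> n" "1 \<le> m" "wfi x" "wfi y" "(iota ^^ m) x = (iota ^^ n) y"
  shows "cls n x = cls m y"
proof (rule set_eqI)
  fix q :: "nat \<times> vx"
  obtain p z where q: "q = (p, z)" by (cases q)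
  show "q \<in> cls n x \<longleftrightarrow> q \<in> cls m y"
    using cls_dir[OF assms] cls_dir[OF assms(2,1,4,3) assms(5)[symmetric]] q by blast
qed

lemma F0_nth: "L < 5 \<Longrightarrow> F0 ! L = V L"
  by (auto simp: F0_def dest!: less5)

lemma cls0_neq:
  assumes "1 \<le> m" "L < 5"
  shows "cls 0 (V L) \<noteq> cls m y"
proof
  assume eq: "cls 0 (V L) = cls m y"
  have "(m, y) \<in> cls m y" by (simp add: cls_mem)
  then have "(m, y) \<in> cls 0 (V L)" using eq by simp
  then have y: "(iota ^^ m) (V L) = y" by (simp add: cls_mem)
  obtain m' where m: "m = Suc m'" using assms(1) by (cases m) auto
  have "(L + 5 + 4) mod 5 = (L + 4) mod 5" by presburger
  then have i5: "iota (V (L + 5)) = iota (V L)" by simp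
  have "(iota ^^ m) (V (L + 5)) = (iota ^^ m) (V L)"
    unfolding m funpow_Suc_right comp_apply i5 ..
  then have "(0, V (L + 5)) \<in> cls m y" using y by (simp add: cls_mem)
  then have "(0, V (L + 5)) \<in> cls 0 (V L)" using eq by simp
  then show False by (simp add: cls_mem)
qed

lemma lift_eq:
  assumes F: "F \<in> Kn n" and G: "G \<in> Kn m" and L: "L < 5" and e: "cls n (F!L) = cls m (G!L)"
  shows "map (cls n) F = map (cls m) G"
proof (cases "n = 0 \<or> m = 0")
  case True
  then show ?thesis
  proof
    assume n: "n = 0"
    then have F0: "F = F0" using F by (simp add: Kn_0)
    show ?thesis
    proof (cases "m = 0")
      case True then have "G = F0" using G by (simp add: Kn_0)
      then show ?thesis using F0 n True by simp
    next
      case False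
      then show ?thesis using cls0_neq[of m L "G!L"] e F0 n L F0_nth by simp
    qed
  next
    assume m: "m = 0"
    then have G0: "G = F0" using G by (simp add: Kn_0)
    show ?thesis
    proof (cases "n = 0")
      case True then have "F = F0" using F by (simp add: Kn_0)
      then show ?thesis using G0 m True by simp
    next
      case False
      then show ?thesis using cls0_neq[of n L "F!L"] e G0 m L F0_nth by simp
    qed
  qed
next
  case False
  then have n1: "1 \<le> n" and m1: "1 \<le> m" by auto
  have lF: "length F = 5" and lG: "length G = 5" using Inv_facts(1)[OF F] Inv_facts(1)[OF G] by auto
  have wF: "\<And>i. i < 5 \<Longrightarrow> wfi (F!i)" using Inv_facts(3)[OF F] lF wfv_wfi nth_mem by metis
  have wG: "\<And>i. i < 5 \<Longrightarrow> wfi (G!i)" using Inv_facts(3)[OF G] lG wfv_wfi nth_mem by metis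
  have "(m, G!L) \<in> cls m (G!L)" by (simp add: cls_mem)
  then have "(m, G!L) \<in> cls n (F!L)" using e by simp
  then have k: "(iota ^^ m) (F!L) = (iota ^^ n) (G!L)" by (simp add: cls_mem)
  have F1: "map (iota ^^ m) F \<in> Kn (n + m)" by (rule Kn_iotaN[OF F])
  have G1: "map (iota ^^ n) G \<in> Kn (n + m)" using Kn_iotaN[OF G, of n] by (simp add: add.commute)
  have "map (iota ^^ m) F ! L = map (iota ^^ n) G ! L" using k lF lG L by simp
  then have FG: "map (iota ^^ m) F = map (iota ^^ n) G" using uniq_fin[OF F1 G1 L] by blast
  show ?thesis
  proof (rule nth_equalityI)
    show "length (map (cls n) F) = length (map (cls m) G)" using lF lG by simp
  next
    fix i assume "i < length (map (cls n) F)"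
    then have i: "i < 5" using lF by simp
    have "map (iota ^^ m) F ! i = map (iota ^^ n) G ! i" using FG by simp
    then have "(iota ^^ m) (F!i) = (iota ^^ n) (G!i)" using i lF lG by simp
    then have "cls n (F!i) = cls m (G!i)" using cls_eq[OF n1 m1 wF[OF i] wG[OF i]] by blast
    then show "map (cls n) F ! i = map (cls m) G ! i" using i lF lG by simp
  qed
qed

lemma K_len: "X \<in> K_faces \<Longrightarrow> length X = 5"
  unfolding K_faces_def using Inv_facts(1) by auto

lemma K_uniq:
  assumes "X \<in> K_faces" "Y \<in> K_faces" "L < 5" "X!L = Y!L"
  shows "X = Y"
proof -
  obtain n F where F: "F \<in> Kn n" "X = map (cls n) F" using assms(1) unfolding K_faces_def by blast
  obtain m G where G: "G \<in> Kn m" "Y = map (cls m) G" using assms(2) unfolding K_faces_def by blast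
  have "cls n (F!L) = cls m (G!L)" using assms(3,4) F G Inv_facts(1)[OF F(1)] Inv_facts(1)[OF G(1)] by simp
  then show ?thesis using lift_eq[OF F(1) G(1) assms(3)] F G by simp
qed




lemma share_common:
  assumes "share_edge F G" "length F = 5" "length G = 5"
  shows "\<exists>a. a \<in> set F \<and> a \<in> set G"
proof -
  obtain e where e: "e \<in> face_edges F" "e \<in> face_edges G" using assms(1) unfolding share_edge_def by blast
  obtain i where i: "i < 5" "e = {F!i, F!((i+1) mod 5)}" using e(1) unfolding face_edges_def by blast
  obtain j where j: "j < 5" "e = {G!j, G!((j+1) mod 5)}" using e(2) unfolding face_edges_def by blast
  have "F!i \<in> set F" using i assms(2) by simp
  moreover have "F!i \<in> set G"
  proof -
    have "F!i \<in> {G!j, G!((j+1) mod 5)}" using i j by blast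
    moreover have "G!j \<in> set G" "G!((j+1) mod 5) \<in> set G" using j assms(3) by simp_all
    ultimately show ?thesis by auto
  qed
  ultimately show ?thesis by blast
qed

lemma fixed_face:
  assumes X: "X \<in> K_faces" and Y: "map \<phi> X \<in> K_faces" and a: "a \<in> set X" "\<phi> a = a"
  shows "map \<phi> X = X"
proof -
  have l: "length X = 5" by (rule K_len[OF X])
  obtain L where L: "L < length X" "X!L = a" using a(1) by (auto simp: in_set_conv_nth)
  have "map \<phi> X ! L = X ! L" using L a(2) by simp
  then show ?thesis using K_uniq[OF Y X] L l by simp
qed

lemma fixed_elem: "map \<phi> X = X \<Longrightarrow> a \<in> set X \<Longrightarrow> \<phi> a = a"
  by (metis in_set_conv_nth length_map nth_map)

theorem propositionp:
  fixes v :: kvert and P Q :: "kvert list set" and \<phi> :: "kvert \<Rightarrow> kvert"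
  assumes "v \<in> verts K_faces"
    and "finite P" and "P \<subseteq> K_faces" and "chain_connected P" and "v \<in> verts P"
    and "finite Q" and "Q \<subseteq> K_faces" and "chain_connected Q" and "v \<in> verts Q"
    and "cell_iso \<phi> P Q" and "\<phi> v = v"
  shows "P = Q"
proof -
  have PQ: "map \<phi> ` P = Q" using assms(10) unfolding cell_iso_def by blast
  have inK: "\<And>X. X \<in> P \<Longrightarrow> map \<phi> X \<in> K_faces" using PQ assms(7) by blast
  have PK: "\<And>X. X \<in> P \<Longrightarrow> X \<in> K_faces" using assms(3) by blast
  obtain F1 where F1: "F1 \<in> P" "v \<in> set F1" using assms(5) unfolding verts_def by blast
  have fix1: "map \<phi> F1 = F1" using fixed_face[OF PK[OF F1(1)] inK[OF F1(1)] F1(2) assms(11)] .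
  have fixall: "map \<phi> G = G" if G: "G \<in> P" for G
  proof -
    obtain cs where cs: "cs \<noteq> []" "hd cs = F1" "last cs = G" "set cs \<subseteq> P"
      "\<And>i. Suc i < length cs \<Longrightarrow> share_edge (cs ! i) (cs ! Suc i)"
      using assms(4) F1(1) G unfolding chain_connected_def by blast
    have "\<forall>i. i < length cs \<longrightarrow> map \<phi> (cs!i) = cs!i"
    proof (intro allI)
      fix i show "i < length cs \<longrightarrow> map \<phi> (cs!i) = cs!i"
      proof (induction i)
        case 0 then show ?case using cs(1,2) fix1 by (simp add: hd_conv_nth)
      next
        case (Suc i)
        show ?case
        proof
          assume si: "Suc i < length cs"
          have Xi: "cs!i \<in> P" "cs!Suc i \<in> P" using si cs(4) by (auto dest: nth_mem)
          have fi: "map \<phi> (cs!i) = cs!i" using Suc.IH si by simp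
          obtain a where a: "a \<in> set (cs!i)" "a \<in> set (cs!Suc i)"
            using share_common[OF cs(5)[OF si] K_len[OF PK[OF Xi(1)]] K_len[OF PK[OF Xi(2)]]] by blast
          have "\<phi> a = a" using fixed_elem[OF fi a(1)] .
          then show "map \<phi> (cs!Suc i) = cs!Suc i"
            using fixed_face[OF PK[OF Xi(2)] inK[OF Xi(2)] a(2)] by blast
        qed
      qed
    qed
    then have "map \<phi> (cs!(length cs - 1)) = cs!(length cs - 1)" using cs(1) by simp
    then show ?thesis using cs(1,3) by (simp add: last_conv_nth)
  qed
  have "map \<phi> ` P = P" using fixall by simp
  then show ?thesis using PQ by simp
qed



end
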